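(* The initial algebra of the endofunctor $F=M\otimes-$ on $\mathbf{Met_3}^{L}$ is the initial $F$-algebra $(G,g)$ of $\mathbf{Set_3}$ with $G$ endowed with the discrete metric.
   Context: A tripointed set is a set with three distinct distinguished points $T,L,R$; $\mathbf{Set_3}$ is the category of tripointed sets with maps preserving $T,L,R$. A tripointed metric space is a tripointed set with a metric bounded by $1$ in which $T,L,R$ have pairwise distance $1$; $\mathbf{Met_3}^{L}$ has these as objects and Lipschitz maps preserving $T,L,R$ as morphisms. Let $M=\{a,b,c\}$. $F=M\otimes-$: $M\otimes X$ is the quotient of $M\times X$ by the equivalence relation generated by $(b,T)\sim(a,L)$, $(a,R)\sim(c,T)$, $(c,L)\sim(b,R)$, elements written $m\otimes x$, distinguished points $a\otimes T$, $b\otimes L$, $c\otimes R$, and $(M\otimes f)(m\otimes x)=m\otimes f(x)$; in the metric setting $M\times X$ has metric $\tfrac12 d(x,y)$ within a copy and $1$ between different copies, and $M\otimes X$ has the quotient metric. An $F$-algebra is a pair $(A,\alpha\colon FA\to A)$, with algebra morphisms $h$ satisfying $h\circ\alpha=\beta\circ Fh$. Concretely, $G$ consists of expressions $m_0\otimes\cdots\otimes m_{n-1}\otimes z$ ($n\ge0$, $m_i\in M$, $z\in\{T,L,R\}$) modulo the identifications induced by the relations above and by $T=a\otimes T$, $L=b\otimes L$, $R=c\otimes R$ (the colimit in $\mathbf{Set_3}$ of $I\to FI\to F^2I\to\cdots$ with $I=\{T,L,R\}$), and $g(m\otimes w)=m\otimes w$. The discrete metric is $d(x,y)=1$ for $x\ne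 y$. *)

theory Defs
  imports Complex_Main
begin

datatype M = Ma | Mb | Mc

datatype 'a tps = TPS (car: "'a set") (pT: 'a) (pL: 'a) (pR: 'a)

definition met3 :: "'a tps \<Rightarrow> ('a \<Rightarrow> 'a \<Rightarrow> real) \<Rightarrow> bool" where
  "met3 S d \<longleftrightarrow>
     pT S \<in> car S \<and> pL S \<in> car S \<and> pR S \<in> car S \<and>
     (\<forall>x\<in>car S. \<forall>y\<in>car S. 0 \<le> d x y \<and> d x y \<le> 1 \<and> (d x y = 0 \<longleftrightarrow> x = y) \<and> d x y = d y x) \<and>
     (\<forall>x\<in>car S. \<forall>y\<in>car S. \<forall>z\<in>car S. d x z \<le> d x y + d y z) \<and>
     d (pT S) (pL S) = 1 \<and> d (pT S) (pR S) = 1 \<and> d (pL S) (pR S) = 1"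

definition hom3 :: "'a tps \<Rightarrow> ('a \<Rightarrow> 'a \<Rightarrow> real) \<Rightarrow> 'b tps \<Rightarrow> ('b \<Rightarrow> 'b \<Rightarrow> real)
                     \<Rightarrow> ('a \<Rightarrow> 'b) \<Rightarrow> bool" where
  "hom3 S d S' d' f \<longleftrightarrow>
     f ` car S \<subseteq> car S' \<and> f (pT S) = pT S' \<and> f (pL S) = pL S' \<and> f (pR S) = pR S' \<and>
     (\<exists>K. \<forall>x\<in>car S. \<forall>y\<in>car S. d' (f x) (f y) \<le> K * d x y)"

definition tens_base :: "'a tps \<Rightarrow> ((M \<times> 'a) \<times> (M \<times> 'a)) set" where
  "tens_base S = {((Mb, pT S), (Ma, pL S)), ((Ma, pR S), (Mc, pT S)), ((Mc, pL S), (Mb, pR S))}"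

definition tens_rel :: "'a tps \<Rightarrow> ((M \<times> 'a) \<times> (M \<times> 'a)) set" where
  "tens_rel S = (tens_base S \<union> (tens_base S)\<inverse>)\<^sup>*"

definition tcls :: "'a tps \<Rightarrow> M \<Rightarrow> 'a \<Rightarrow> (M \<times> 'a) set" where
  "tcls S m x = tens_rel S `` {(m, x)}"

definition tens :: "'a tps \<Rightarrow> (M \<times> 'a) set tps" where
  "tens S = TPS ((UNIV \<times> car S) // tens_rel S)
                (tcls S Ma (pT S)) (tcls S Mb (pL S)) (tcls S Mc (pR S))"

text \<open>(M \<otimes> f)(m \<otimes> x) = m \<otimes> f x (union over representatives of the class).\<close>
definition tmap :: "'a tps \<Rightarrow> 'b tps \<Rightarrow> ('a \<Rightarrow> 'b) \<Rightarrow> (M \<times> 'a) set \<Rightarrow> (M \<times> 'b) set" where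
  "tmap S S' f c = (\<Union>(m, x)\<in>c. tcls S' m (f x))"

definition prod_d :: "('a \<Rightarrow> 'a \<Rightarrow> real) \<Rightarrow> (M \<times> 'a) \<Rightarrow> (M \<times> 'a) \<Rightarrow> real" where
  "prod_d d p q = (if fst p = fst q then d (snd p) (snd q) / 2 else 1)"

definition qd :: "'a tps \<Rightarrow> ('a \<Rightarrow> 'a \<Rightarrow> real) \<Rightarrow> (M \<times> 'a) set \<Rightarrow> (M \<times> 'a) set \<Rightarrow> real" where
  "qd S d c1 c2 = Inf {(\<Sum>i<n. prod_d d (p i) (q i)) | n p q.
       n \<ge> 1 \<and> (\<forall>i<n. p i \<in> UNIV \<times> car S \<and> q i \<in> UNIV \<times> car S) \<and>
       p 0 \<in> c1 \<and> q (n - 1) \<in> c2 \<and>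
       (\<forall>i. Suc i < n \<longrightarrow> (q i, p (Suc i)) \<in> tens_rel S)}"

definition falg :: "'a tps \<Rightarrow> ('a \<Rightarrow> 'a \<Rightarrow> real) \<Rightarrow> ((M \<times> 'a) set \<Rightarrow> 'a) \<Rightarrow> bool" where
  "falg S d \<alpha> \<longleftrightarrow> met3 S d \<and> hom3 (tens S) (qd S d) S d \<alpha>"

datatype Z = ZT | ZL | ZR

text \<open>Words m_0 \<otimes> ... \<otimes> m_{n-1} \<otimes> z represented as (list of m_i, z).\<close>
definition G_base :: "((M list \<times> Z) \<times> (M list \<times> Z)) set" where
  "G_base = {((xs, ZT), (xs @ [Ma], ZT)) | xs. True} \<union>
            {((xs, ZL), (xs @ [Mb], ZL)) | xs. True} \<union>
            {((xs, ZR), (xs @ [Mc], ZR)) | xs. True} \<union>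
            {((xs @ [Mb], ZT), (xs @ [Ma], ZL)) | xs. True} \<union>
            {((xs @ [Ma], ZR), (xs @ [Mc], ZT)) | xs. True} \<union>
            {((xs @ [Mc], ZL), (xs @ [Mb], ZR)) | xs. True}"

definition G_rel :: "((M list \<times> Z) \<times> (M list \<times> Z)) set" where
  "G_rel = (G_base \<union> G_base\<inverse>)\<^sup>*"

definition Gcl :: "M list \<Rightarrow> Z \<Rightarrow> (M list \<times> Z) set" where
  "Gcl xs z = G_rel `` {(xs, z)}"

definition G :: "(M list \<times> Z) set tps" where
  "G = TPS (UNIV // G_rel) (Gcl [] ZT) (Gcl [] ZL) (Gcl [] ZR)"

definition gmap :: "(M \<times> (M list \<times> Z) set) set \<Rightarrow> (M list \<times> Z) set" where
  "gmap c = (\<Union>(m, w)\<in>c. \<Union>(xs, z)\<in>w. Gcl (m # xs) z)"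

definition disc :: "'a \<Rightarrow> 'a \<Rightarrow> real" where
  "disc x y = (if x = y then 0 else 1)"

end

theory Submission
  imports Defs
begin

lemma equiv_sc: "equiv UNIV ((r \<union> r\<inverse>)\<^sup>*)"
  unfolding equiv_def
proof (intro conjI)
  show "refl ((r \<union> r\<inverse>)\<^sup>*)" by (simp add: refl_rtrancl)
  show "sym ((r \<union> r\<inverse>)\<^sup>*)" by (rule sym_rtrancl) (auto simp: sym_def)
  show "trans ((r \<union> r\<inverse>)\<^sup>*)" by (rule trans_rtrancl)
qed simp

lemma equivG: "equiv UNIV G_rel" unfolding G_rel_def by (rule equiv_sc)
lemma equivT: "equiv UNIV (tens_rel S)" unfolding tens_rel_def by (rule equiv_sc)

lemma cls_eq: "equiv UNIV r \<Longrightarrow> (a, b) \<in> r \<Longrightarrow> r``{a} = r``{b}"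
  by (rule equiv_class_eq)

lemma G_base_iff: "(a, b) \<in> G_base \<longleftrightarrow>
   (\<exists>xs. a = (xs, ZT) \<and> b = (xs @ [Ma], ZT)) \<or> (\<exists>xs. a = (xs, ZL) \<and> b = (xs @ [Mb], ZL)) \<or>
   (\<exists>xs. a = (xs, ZR) \<and> b = (xs @ [Mc], ZR)) \<or> (\<exists>xs. a = (xs @ [Mb], ZT) \<and> b = (xs @ [Ma], ZL)) \<or>
   (\<exists>xs. a = (xs @ [Ma], ZR) \<and> b = (xs @ [Mc], ZT)) \<or> (\<exists>xs. a = (xs @ [Mc], ZL) \<and> b = (xs @ [Mb], ZR))"
  unfolding G_base_def by blast

lemma G_base_cons: "(a, b) \<in> G_base \<Longrightarrow> ((m # fst a, snd a), (m # fst b, snd b)) \<in> G_base"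
  unfolding G_base_iff
  apply (elim disjE exE)
  apply (rule disjI1; rule exI[where x="m # _"]; simp; fail)
  apply (rule disjI2, rule disjI1; rule exI[where x="m # _"]; simp; fail)
  apply (rule disjI2, rule disjI2, rule disjI1; rule exI[where x="m # _"]; simp; fail)
  apply (rule disjI2, rule disjI2, rule disjI2, rule disjI1; rule exI[where x="m # _"]; simp; fail)
  apply (rule disjI2, rule disjI2, rule disjI2, rule disjI2, rule disjI1; rule exI[where x="m # _"]; simp; fail)
  apply (rule disjI2, rule disjI2, rule disjI2, rule disjI2, rule disjI2; rule exI[where x="m # _"]; simp; fail)
  done

lemma G_rel_cons: "(a, b) \<in> G_rel \<Longrightarrow> ((m # fst a, snd a), (m # fst b, snd b)) \<in> G_rel"
  unfolding G_rel_def
proof (induction rule: rtrancl_induct)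
  case base then show ?case by simp
next
  case (step y z)
  from step(2) have "((m # fst y, snd y), (m # fst z, snd z)) \<in> G_base \<union> G_base\<inverse>"
    using G_base_cons[of y z m] G_base_cons[of z y m] by auto
  with step(3) show ?case by (rule rtrancl_into_rtrancl)
qed

lemma G_resp:
  assumes "F Ma (P ZT) = P ZT" "F Mb (P ZL) = P ZL" "F Mc (P ZR) = P ZR"
    "F Mb (P ZT) = F Ma (P ZL)" "F Ma (P ZR) = F Mc (P ZT)" "F Mc (P ZL) = F Mb (P ZR)"
    and "(a, b) \<in> G_rel"
  shows "foldr F (fst a) (P (snd a)) = foldr F (fst b) (P (snd b))"
proof -
  have base: "foldr F (fst a) (P (snd a)) = foldr F (fst b) (P (snd b))" if "(a, b) \<in> G_base" for a b
    using that assms(1-6) unfolding G_base_def by auto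
  show ?thesis using assms(7) unfolding G_rel_def
  proof (induction rule: rtrancl_induct)
    case base then show ?case by simp
  next
    case (step y z) then show ?case using base[of y z] base[of z y] by auto
  qed
qed

definition vm :: "M \<Rightarrow> complex" where "vm m = (case m of Ma \<Rightarrow> 0 | Mb \<Rightarrow> 1 | Mc \<Rightarrow> \<i>)"
definition vz :: "Z \<Rightarrow> complex" where "vz z = (case z of ZT \<Rightarrow> 0 | ZL \<Rightarrow> 1 | ZR \<Rightarrow> \<i>)"

lemma G_distinct: "Gcl [] ZT \<noteq> Gcl [] ZL" "Gcl [] ZT \<noteq> Gcl [] ZR" "Gcl [] ZL \<noteq> Gcl [] ZR"
proof -
  let ?F = "\<lambda>m p. (vm m + p) / 2"
  have r: "foldr ?F (fst a) (vz (snd a)) = foldr ?F (fst b) (vz (snd b))" if "(a, b) \<in> G_rel" for a b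
    by (rule G_resp[OF _ _ _ _ _ _ that]) (simp_all add: vm_def vz_def)
  have k: "(([], z), ([], z')) \<in> G_rel" if "Gcl [] z = Gcl [] z'" for z z'
    using eq_equiv_class[OF that[unfolded Gcl_def] equivG] by simp
  show "Gcl [] ZT \<noteq> Gcl [] ZL" using r[OF k[of ZT ZL]] by (auto simp: vz_def)
  show "Gcl [] ZT \<noteq> Gcl [] ZR" using r[OF k[of ZT ZR]] by (auto simp: vz_def)
  show "Gcl [] ZL \<noteq> Gcl [] ZR" using r[OF k[of ZL ZR]] by (auto simp: vz_def complex_eq_iff)
qed

lemma tens_map:
  assumes "f (pT S) = pT S'" "f (pL S) = pL S'" "f (pR S) = pR S'" and "(a, b) \<in> tens_rel S"
  shows "((fst a, f (snd a)), (fst b, f (snd b))) \<in> tens_rel S'"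
  using assms(4) unfolding tens_rel_def
proof (induction rule: rtrancl_induct)
  case base then show ?case by simp
next
  case (step y z)
  have "((fst y, f (snd y)), (fst z, f (snd z))) \<in> tens_base S' \<union> (tens_base S')\<inverse>"
    using step(2) unfolding tens_base_def
    by (elim UnE insertE emptyE converseE; simp add: assms(1-3))
  with step(3) show ?case by (rule rtrancl_into_rtrancl)
qed

lemma tmap_cls:
  assumes "f (pT S) = pT S'" "f (pL S) = pL S'" "f (pR S) = pR S'"
  shows "tmap S S' f (tcls S m w) = tcls S' m (f w)"
proof
  show "tmap S S' f (tcls S m w) \<subseteq> tcls S' m (f w)"
  proof
    fix x assume "x \<in> tmap S S' f (tcls S m w)"
    then obtain m' w' where mw: "((m, w), (m', w')) \<in> tens_rel S" and x: "x \<in> tcls S' m' (f w')"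
      unfolding tmap_def tcls_def by auto
    have "((m, f w), (m', f w')) \<in> tens_rel S'" using tens_map[OF assms mw] by simp
    then have "tcls S' m (f w) = tcls S' m' (f w')" unfolding tcls_def by (rule cls_eq[OF equivT])
    with x show "x \<in> tcls S' m (f w)" by simp
  qed
next
  have "(m, w) \<in> tcls S m w" unfolding tcls_def tens_rel_def by simp
  then show "tcls S' m (f w) \<subseteq> tmap S S' f (tcls S m w)" unfolding tmap_def by blast
qed

lemma Gcl_self: "(xs, z) \<in> Gcl xs z" unfolding Gcl_def G_rel_def by simp

lemma Gcl_rel: "u \<in> Gcl xs z \<Longrightarrow> ((xs, z), u) \<in> G_rel" unfolding Gcl_def by simp

lemma G_six: "(([Mb], ZT), ([Ma], ZL)) \<in> G_rel" "(([Ma], ZR), ([Mc], ZT)) \<in> G_rel"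
  "(([Mc], ZL), ([Mb], ZR)) \<in> G_rel"
  "(([Ma], ZL), ([Mb], ZT)) \<in> G_rel" "(([Mc], ZT), ([Ma], ZR)) \<in> G_rel"
  "(([Mb], ZR), ([Mc], ZL)) \<in> G_rel"
proof -
  have b: "(([Mb], ZT), ([Ma], ZL)) \<in> G_base" "(([Ma], ZR), ([Mc], ZT)) \<in> G_base"
    "(([Mc], ZL), ([Mb], ZR)) \<in> G_base"
    unfolding G_base_def by (force+)
  then show "(([Mb], ZT), ([Ma], ZL)) \<in> G_rel" "(([Ma], ZR), ([Mc], ZT)) \<in> G_rel"
    "(([Mc], ZL), ([Mb], ZR)) \<in> G_rel"
    "(([Ma], ZL), ([Mb], ZT)) \<in> G_rel" "(([Mc], ZT), ([Ma], ZR)) \<in> G_rel"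
    "(([Mb], ZR), ([Mc], ZL)) \<in> G_rel"
    unfolding G_rel_def by (auto intro: r_into_rtrancl)
qed

lemma G_trans: "(a, b) \<in> G_rel \<Longrightarrow> (b, c) \<in> G_rel \<Longrightarrow> (a, c) \<in> G_rel"
  unfolding G_rel_def by (rule rtrancl_trans)

lemma gmap_inv:
  assumes w: "w \<in> UNIV // G_rel" and xz: "(xs, z) \<in> w" and r: "((m, w), b) \<in> tens_rel G"
  shows "\<forall>u\<in>snd b. ((m # xs, z), (fst b # fst u, snd u)) \<in> G_rel"
  using r unfolding tens_rel_def
proof (induction rule: rtrancl_induct)
  case base
  show ?case
  proof
    fix u assume "u \<in> snd (m, w)"
    then have "u \<in> w" by simp
    then have "((xs, z), u) \<in> G_rel"
      using quotient_eq_iff[OF equivG w w xz] by simp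
    from G_rel_cons[OF this, of m] show "((m # xs, z), (fst (m, w) # fst u, snd u)) \<in> G_rel" by simp
  qed
next
  case (step y b)
  have hb: "((m # xs, z), (fst b # fst u, snd u)) \<in> G_rel"
    if "((m # xs, z), ([m1], z1)) \<in> G_rel" "(([m1], z1), ([fst b], z2)) \<in> G_rel" "u \<in> Gcl [] z2"
    for m1 z1 z2 u
  proof -
    have "(([fst b], z2), (fst b # fst u, snd u)) \<in> G_rel"
      using G_rel_cons[OF Gcl_rel[OF that(3)], of "fst b"] by simp
    then show ?thesis using that(1,2) G_trans by blast
  qed
  have y1: "((m # xs, z), ([fst y], z1)) \<in> G_rel" if "snd y = Gcl [] z1" for z1
    using step(3) Gcl_self[of "[]" z1] that by fastforce
  obtain m1 z1 m2 z2 where yb: "y = (m1, Gcl [] z1)" "b = (m2, Gcl [] z2)"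
    "(([m1], z1), ([m2], z2)) \<in> G_rel"
    using step(2) G_six unfolding tens_base_def G_def tps.sel by blast
  show ?case
  proof
    fix u assume u: "u \<in> snd b"
    have "((m # xs, z), ([fst y], z1)) \<in> G_rel" by (rule y1) (simp add: yb)
    then show "((m # xs, z), (fst b # fst u, snd u)) \<in> G_rel"
      by (rule hb) (use yb u in simp_all)
  qed
qed

lemma gmap_cls:
  assumes w: "w \<in> UNIV // G_rel" and xz: "(xs, z) \<in> w"
  shows "gmap (tcls G m w) = Gcl (m # xs) z"
proof
  show "gmap (tcls G m w) \<subseteq> Gcl (m # xs) z"
  proof
    fix x assume "x \<in> gmap (tcls G m w)"
    then obtain m' w' xs' z' where mw: "(m', w') \<in> tcls G m w" and u: "(xs', z') \<in> w'"
      and x: "x \<in> Gcl (m' # xs') z'"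
      unfolding gmap_def by auto
    from mw have "((m, w), (m', w')) \<in> tens_rel G" unfolding tcls_def by simp
    from gmap_inv[OF w xz this] u have "((m # xs, z), (m' # xs', z')) \<in> G_rel" by auto
    then have "Gcl (m # xs) z = Gcl (m' # xs') z'" unfolding Gcl_def by (rule cls_eq[OF equivG])
    with x show "x \<in> Gcl (m # xs) z" by simp
  qed
next
  have "(m, w) \<in> tcls G m w" unfolding tcls_def tens_rel_def by simp
  with xz show "Gcl (m # xs) z \<subseteq> gmap (tcls G m w)" unfolding gmap_def by blast
qed

lemma prod_d_disc: "0 \<le> prod_d disc p q" "p \<noteq> q \<Longrightarrow> 1/2 \<le> prod_d disc p q"
  unfolding prod_d_def disc_def by (auto simp: prod_eq_iff)

lemma chain_stays:
  assumes "x = tens_rel S `` {a}" "\<forall>i<n. p i = q i" "p 0 \<in> x"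
    "\<forall>i. Suc i < n \<longrightarrow> (q i, p (Suc i)) \<in> tens_rel S"
  shows "i < n \<Longrightarrow> q i \<in> x"
proof (induction i)
  case 0 then show ?case using assms by auto
next
  case (Suc i)
  then have "q i \<in> x" by simp
  moreover have "(q i, p (Suc i)) \<in> tens_rel S" using assms(4) Suc by blast
  ultimately have "p (Suc i) \<in> x" using assms(1) equivT[of S]
    unfolding equiv_def trans_def by blast
  then show ?case using assms(2) Suc by simp
qed

lemma qd_bounds:
  assumes x: "x \<in> car (tens S)" and y: "y \<in> car (tens S)"
  shows "0 \<le> qd S disc x y" "x \<noteq> y \<Longrightarrow> 1/2 \<le> qd S disc x y"
proof -
  obtain a where a: "a \<in> UNIV \<times> car S" "x = tens_rel S `` {a}"
    using x unfolding tens_def by (auto elim: quotientE)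
  obtain b where b: "b \<in> UNIV \<times> car S" "y = tens_rel S `` {b}"
    using y unfolding tens_def by (auto elim: quotientE)
  have ax: "a \<in> x" "b \<in> y" using a b unfolding tens_rel_def by auto
  define Ch where "Ch = {(\<Sum>i<n. prod_d disc (p i) (q i)) | n p q.
       n \<ge> 1 \<and> (\<forall>i<n. p i \<in> UNIV \<times> car S \<and> q i \<in> UNIV \<times> car S) \<and>
       p 0 \<in> x \<and> q (n - 1) \<in> y \<and>
       (\<forall>i. Suc i < n \<longrightarrow> (q i, p (Suc i)) \<in> tens_rel S)}"
  have qd: "qd S disc x y = Inf Ch" unfolding qd_def Ch_def by simp
  have ne: "Ch \<noteq> {}"
  proof -
    have "prod_d disc a b \<in> Ch"
      unfolding Ch_def mem_Collect_eq
      by (rule exI[where x=1], rule exI[where x="\<lambda>_. a"], rule exI[where x="\<lambda>_. b"]) (use a b ax in \<open>auto simp: lessThan_Suc One_nat_def\<close>)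
    then show ?thesis by blast
  qed
  have ge0: "0 \<le> s" if "s \<in> Ch" for s
    using that unfolding Ch_def by (auto intro!: sum_nonneg prod_d_disc)
  show "0 \<le> qd S disc x y" unfolding qd by (rule cInf_greatest[OF ne ge0])
  assume xy: "x \<noteq> y"
  have ge: "1/2 \<le> s" if "s \<in> Ch" for s
  proof -
    obtain n p q where s: "s = (\<Sum>i<n. prod_d disc (p i) (q i))" and n: "n \<ge> 1"
      and p0: "p 0 \<in> x" and qn: "q (n - 1) \<in> y"
      and lk: "\<forall>i. Suc i < n \<longrightarrow> (q i, p (Suc i)) \<in> tens_rel S"
      using \<open>s \<in> Ch\<close> unfolding Ch_def by blast
    show ?thesis
    proof (cases "\<forall>i<n. p i = q i")
      case True
      have "q (n - 1) \<in> x" using chain_stays[OF a(2) True p0 lk, of "n - 1"] n by simp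
      with qn have "x \<inter> y \<noteq> {}" by blast
      then obtain e where "e \<in> tens_rel S `` {a} \<inter> tens_rel S `` {b}" using a(2) b(2) by blast
      then have "(a, b) \<in> tens_rel S" by (rule equiv_class_nondisjoint[OF equivT])
      then have "x = y" using a(2) b(2) equiv_class_eq[OF equivT] by simp
      with xy show ?thesis by simp
    next
      case False
      then obtain j where j: "j < n" "p j \<noteq> q j" by blast
      have "1/2 \<le> prod_d disc (p j) (q j)" using prod_d_disc(2) j by simp
      also have "\<dots> \<le> (\<Sum>i<n. prod_d disc (p i) (q i))"
        using j by (intro member_le_sum prod_d_disc(1)) auto
      finally show ?thesis using s by simp
    qed
  qed
  show "1/2 \<le> qd S disc x y" unfolding qd by (rule cInf_greatest[OF ne ge])
qed

lemma G_sel: "car G = UNIV // G_rel" "pT G = Gcl [] ZT" "pL G = Gcl [] ZL" "pR G = Gcl [] ZR"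
  unfolding G_def by simp_all

lemma tens_sel: "car (tens S) = (UNIV \<times> car S) // tens_rel S" "pT (tens S) = tcls S Ma (pT S)"
  "pL (tens S) = tcls S Mb (pL S)" "pR (tens S) = tcls S Mc (pR S)"
  unfolding tens_def by simp_all

lemma Gcl_in: "Gcl xs z \<in> car G"
  unfolding G_sel Gcl_def by (rule quotientI) simp

lemma carG_E: assumes "x \<in> car G" obtains xs z where "x = Gcl xs z"
  using assms unfolding G_sel Gcl_def by (auto elim: quotientE)

lemma tcls_in: "w \<in> car S \<Longrightarrow> tcls S m w \<in> car (tens S)"
  unfolding tens_sel tcls_def by (rule quotientI) simp

lemma carT_E: assumes "c \<in> car (tens S)" obtains m w where "c = tcls S m w" "w \<in> car S"
  using assms unfolding tens_sel tcls_def by (auto elim: quotientE)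

lemma gmap_Gcl: "gmap (tcls G m (Gcl xs z)) = Gcl (m # xs) z"
  by (rule gmap_cls) (use Gcl_in[of xs z] Gcl_self[of xs z] in \<open>auto simp: G_sel\<close>)

lemma Gcl_top: "Gcl [Ma] ZT = Gcl [] ZT" "Gcl [Mb] ZL = Gcl [] ZL" "Gcl [Mc] ZR = Gcl [] ZR"
proof -
  have "(([], ZT), ([Ma], ZT)) \<in> G_base" "(([], ZL), ([Mb], ZL)) \<in> G_base"
    "(([], ZR), ([Mc], ZR)) \<in> G_base" unfolding G_base_def by force+
  then have "(([], ZT), ([Ma], ZT)) \<in> G_rel" "(([], ZL), ([Mb], ZL)) \<in> G_rel"
    "(([], ZR), ([Mc], ZR)) \<in> G_rel" unfolding G_rel_def by auto
  then show "Gcl [Ma] ZT = Gcl [] ZT" "Gcl [Mb] ZL = Gcl [] ZL" "Gcl [Mc] ZR = Gcl [] ZR"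
    unfolding Gcl_def by (simp_all add: cls_eq[OF equivG, symmetric])
qed

lemma gmap_hom: "hom3 (tens G) (qd G disc) G disc gmap"
  unfolding hom3_def
proof (intro conjI)
  show "gmap ` car (tens G) \<subseteq> car G"
  proof
    fix y assume "y \<in> gmap ` car (tens G)"
    then obtain c where c: "c \<in> car (tens G)" "y = gmap c" by blast
    then obtain m w where "c = tcls G m w" "w \<in> car G" by (auto elim: carT_E)
    moreover from this obtain xs z where "w = Gcl xs z" by (auto elim: carG_E)
    ultimately show "y \<in> car G" using c gmap_Gcl Gcl_in by simp
  qed
  show "gmap (pT (tens G)) = pT G" "gmap (pL (tens G)) = pL G" "gmap (pR (tens G)) = pR G"
    by (simp_all add: tens_sel G_sel gmap_Gcl Gcl_top)
  show "\<exists>K. \<forall>x\<in>car (tens G). \<forall>y\<in>car (tens G). disc (gmap x) (gmap y) \<le> K * qd G disc x y"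
  proof (intro exI[of _ 2] ballI)
    fix x y assume x: "x \<in> car (tens G)" and y: "y \<in> car (tens G)"
    show "disc (gmap x) (gmap y) \<le> 2 * qd G disc x y"
    proof (cases "x = y")
      case True then show ?thesis using qd_bounds(1)[OF x y] by (simp add: disc_def)
    next
      case False then show ?thesis using qd_bounds(2)[OF x y] by (simp add: disc_def)
    qed
  qed
qed

lemma met3G: "met3 G disc"
proof -
  have i: "pT G \<in> car G" "pL G \<in> car G" "pR G \<in> car G" using Gcl_in by (simp_all add: G_sel)
  have m: "\<forall>x\<in>car G. \<forall>y\<in>car G. 0 \<le> disc x y \<and> disc x y \<le> 1 \<and> (disc x y = 0 \<longleftrightarrow> x = y) \<and> disc x y = disc y x"
    by (simp add: disc_def)
  have t: "\<forall>x\<in>car G. \<forall>y\<in>car G. \<forall>z\<in>car G. disc x z \<le> disc x y + disc y z"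
    by (simp add: disc_def)
  have o: "disc (pT G) (pL G) = 1" "disc (pT G) (pR G) = 1" "disc (pL G) (pR G) = 1"
    using G_distinct by (simp_all add: disc_def G_sel)
  show ?thesis unfolding met3_def using i m t o by blast
qed

lemma tcls_rel: "((m, w), (m', w')) \<in> tens_base S \<Longrightarrow> tcls S m w = tcls S m' w'"
  unfolding tcls_def by (rule cls_eq[OF equivT]) (auto simp: tens_rel_def)

lemma uniq:
  assumes fa: "falg S d \<alpha>"
    and h1: "hom3 G disc S d h1" "\<forall>c\<in>car (tens G). h1 (gmap c) = \<alpha> (tmap G S h1 c)"
    and h2: "hom3 G disc S d h2" "\<forall>c\<in>car (tens G). h2 (gmap c) = \<alpha> (tmap G S h2 c)"
  shows "h1 (Gcl xs z) = h2 (Gcl xs z)"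
proof (induction xs)
  case Nil
  from h1(1) h2(1) show ?case by (cases z) (auto simp: hom3_def G_sel)
next
  case (Cons m xs)
  have c: "tcls G m (Gcl xs z) \<in> car (tens G)" by (rule tcls_in[OF Gcl_in])
  have p1: "h1 (pT G) = pT S" "h1 (pL G) = pL S" "h1 (pR G) = pR S" using h1(1) by (auto simp: hom3_def)
  have p2: "h2 (pT G) = pT S" "h2 (pL G) = pL S" "h2 (pR G) = pR S" using h2(1) by (auto simp: hom3_def)
  have "h1 (Gcl (m # xs) z) = h1 (gmap (tcls G m (Gcl xs z)))" by (simp add: gmap_Gcl)
  also have "\<dots> = \<alpha> (tmap G S h1 (tcls G m (Gcl xs z)))" using h1(2) c by blast
  also have "\<dots> = \<alpha> (tcls S m (h1 (Gcl xs z)))" by (simp add: tmap_cls[OF p1])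
  finally have "h1 (Gcl (m # xs) z) = \<alpha> (tcls S m (h1 (Gcl xs z)))" .
  moreover have "h2 (Gcl (m # xs) z) = h2 (gmap (tcls G m (Gcl xs z)))" by (simp add: gmap_Gcl)
  moreover have "h2 (gmap (tcls G m (Gcl xs z))) = \<alpha> (tmap G S h2 (tcls G m (Gcl xs z)))" using h2(2) c by blast
  moreover have "\<alpha> (tmap G S h2 (tcls G m (Gcl xs z))) = \<alpha> (tcls S m (h2 (Gcl xs z)))" by (simp add: tmap_cls[OF p2])
  ultimately show ?case using Cons by simp
qed

lemma exist:
  assumes fa: "falg S d \<alpha>"
  shows "\<exists>h. hom3 G disc S d h \<and> (\<forall>c\<in>car (tens G). h (gmap c) = \<alpha> (tmap G S h c))"
proof -
  have met: "met3 S d" and ha: "hom3 (tens S) (qd S d) S d \<alpha>" using fa unfolding falg_def by auto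
  define F where "F m s = \<alpha> (tcls S m s)" for m s
  define P where "P z = (case z of ZT \<Rightarrow> pT S | ZL \<Rightarrow> pL S | ZR \<Rightarrow> pR S)" for z
  define h0 where "h0 u = foldr F (fst u) (P (snd u))" for u
  define h where "h c = h0 (SOME u. u \<in> c)" for c
  have aT0: "\<alpha> (pT (tens S)) = pT S" "\<alpha> (pL (tens S)) = pL S" "\<alpha> (pR (tens S)) = pR S"
    and aimg: "\<alpha> ` car (tens S) \<subseteq> car S"
    using ha unfolding hom3_def by blast+
  have aT: "\<alpha> (tcls S Ma (pT S)) = pT S" "\<alpha> (tcls S Mb (pL S)) = pL S" "\<alpha> (tcls S Mc (pR S)) = pR S"
    using aT0 unfolding tens_sel by simp_all
  have pS: "pT S \<in> car S" "pL S \<in> car S" "pR S \<in> car S" using met unfolding met3_def by blast+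
  have mS: "\<forall>x\<in>car S. \<forall>y\<in>car S. 0 \<le> d x y \<and> d x y \<le> 1 \<and> (d x y = 0 \<longleftrightarrow> x = y) \<and> d x y = d y x"
    using met unfolding met3_def by blast
  have tr: "tcls S Mb (pT S) = tcls S Ma (pL S)" "tcls S Ma (pR S) = tcls S Mc (pT S)"
    "tcls S Mc (pL S) = tcls S Mb (pR S)" by (rule tcls_rel, simp add: tens_base_def)+
  have resp: "h0 a = h0 b" if "(a, b) \<in> G_rel" for a b
    unfolding h0_def by (rule G_resp[OF _ _ _ _ _ _ that]) (simp_all add: F_def P_def aT tr)
  have hG: "h (Gcl xs z) = h0 (xs, z)" for xs z
  proof -
    have "(SOME u. u \<in> Gcl xs z) \<in> Gcl xs z" using Gcl_self by (rule someI)
    from resp[OF Gcl_rel[OF this]] show ?thesis unfolding h_def by simp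
  qed
  have inS: "h0 (xs, z) \<in> car S" for xs z
  proof (induction xs)
    case Nil then show ?case using pS by (cases z) (simp_all add: h0_def P_def)
  next
    case (Cons m xs)
    have "tcls S m (h0 (xs, z)) \<in> car (tens S)" by (rule tcls_in[OF Cons])
    then have "\<alpha> (tcls S m (h0 (xs, z))) \<in> car S" using aimg by blast
    then show ?case by (simp add: h0_def F_def)
  qed
  have pts: "h (pT G) = pT S" "h (pL G) = pL S" "h (pR G) = pR S"
    by (simp_all add: G_sel hG h0_def P_def)
  have hom: "hom3 G disc S d h"
    unfolding hom3_def
  proof (intro conjI)
    show "h ` car G \<subseteq> car S" using hG inS by (auto elim!: carG_E)
    show "h (pT G) = pT S" "h (pL G) = pL S" "h (pR G) = pR S" by (rule pts)+
    show "\<exists>K. \<forall>x\<in>car G. \<forall>y\<in>car G. d (h x) (h y) \<le> K * disc x y"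
    proof (intro exI[of _ 1] ballI)
      fix x y assume x: "x \<in> car G" and y: "y \<in> car G"
      have hx: "h x \<in> car S" "h y \<in> car S" using x y hG inS by (auto elim!: carG_E)
      show "d (h x) (h y) \<le> 1 * disc x y"
      proof (cases "x = y")
        case True
        then have "d (h x) (h y) = 0" using mS hx by simp
        then show ?thesis by (simp add: disc_def)
      next
        case False
        then have "d (h x) (h y) \<le> 1" using mS hx by blast
        then show ?thesis using False by (simp add: disc_def)
      qed
    qed
  qed
  have alg: "\<forall>c\<in>car (tens G). h (gmap c) = \<alpha> (tmap G S h c)"
  proof
    fix c assume "c \<in> car (tens G)"
    then obtain m w where c: "c = tcls G m w" "w \<in> car G" by (auto elim: carT_E)
    then obtain xs z where w: "w = Gcl xs z" by (auto elim: carG_E)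
    show "h (gmap c) = \<alpha> (tmap G S h c)"
      unfolding c w gmap_Gcl tmap_cls[OF pts] hG by (simp add: h0_def F_def)
  qed
  from hom alg show ?thesis by blast
qed

theorem mainTheorem4:
  shows "met3 G disc \<and>
         hom3 (tens G) (qd G disc) G disc gmap \<and>
         (\<forall>(S :: 'a tps) d \<alpha>. falg S d \<alpha> \<longrightarrow>
            (\<exists>h. hom3 G disc S d h \<and>
                 (\<forall>c\<in>car (tens G). h (gmap c) = \<alpha> (tmap G S h c))) \<and>
            (\<forall>h1 h2. hom3 G disc S d h1 \<and> (\<forall>c\<in>car (tens G). h1 (gmap c) = \<alpha> (tmap G S h1 c)) \<and>
                     hom3 G disc S d h2 \<and> (\<forall>c\<in>car (tens G). h2 (gmap c) = \<alpha> (tmap G S h2 c))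
                     \<longrightarrow> (\<forall>x\<in>car G. h1 x = h2 x)))"
proof -
  have U: "\<forall>h1 h2. hom3 G disc S d h1 \<and> (\<forall>c\<in>car (tens G). h1 (gmap c) = \<alpha> (tmap G S h1 c)) \<and>
                     hom3 G disc S d h2 \<and> (\<forall>c\<in>car (tens G). h2 (gmap c) = \<alpha> (tmap G S h2 c))
                     \<longrightarrow> (\<forall>x\<in>car G. h1 x = h2 x)" if fa: "falg S d \<alpha>" for S :: "'a tps" and d \<alpha>
  proof (intro allI impI ballI)
    fix h1 h2 x
    assume H: "hom3 G disc S d h1 \<and> (\<forall>c\<in>car (tens G). h1 (gmap c) = \<alpha> (tmap G S h1 c)) \<and>
                     hom3 G disc S d h2 \<and> (\<forall>c\<in>car (tens G). h2 (gmap c) = \<alpha> (tmap G S h2 c))"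
      and x: "x \<in> car G"
    from x obtain xs z where xe: "x = Gcl xs z" by (rule carG_E)
    have "h1 (Gcl xs z) = h2 (Gcl xs z)"
      by (rule uniq[OF fa]) (use H in blast)+
    then show "h1 x = h2 x" by (simp add: xe)
  qed
  show ?thesis using met3G gmap_hom exist U by blast
qed

end
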